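(* Let $(\mathcal{E},U,P)$ be a BCL triple with associated BCL pair $(V_1,V_2)$ on $H^2_{\mathcal{E}}(\mathbb{D})$, and let $\mathcal{S}$ be a closed subspace of $H^2_{\mathcal{E}}(\mathbb{D})$. Then $\mathcal{S}$ is reducing for both $V_1$ and $V_2$ if and only if there exists a closed subspace $\tilde{\mathcal{E}}\subseteq\mathcal{E}$ which is reducing for both $U$ and $P$ such that $\mathcal{S}=H^2_{\tilde{\mathcal{E}}}(\mathbb{D})$ (the $\tilde{\mathcal E}$-valued Hardy space, viewed as a subspace of $H^2_{\mathcal{E}}(\mathbb{D})$).
   Context: All Hilbert spaces are complex and separable; "projection" means orthogonal projection and $P^\perp=I-P$. $H^2(\mathbb{D})$ is the Hardy space of the open unit disc, $M_z$ is multiplication by $z$, and for a Hilbert space $\mathcal{E}$, $H^2_{\mathcal{E}}(\mathbb{D})$ is the $\mathcal{E}$-valued Hardy space, identified with $H^2(\mathbb{D})\otimes\mathcal{E}$ via $z^m\eta\mapsto z^m\otimes\eta$. A BCL triple is a triple $(\mathcal{E},U,P)$ where $\mathcal{E}$ is a Hilbert space, $U$ is a unitary on $\mathcal{E}$ and $P$ is a projection on $\mathcal{E}$. The BCL pair associated with it is the pair of commuting isometries on $H^2(\mathbb{D})\otimes\mathcal{E}$ $V_1=(I_{H^2}\otimes P+M_z\otimes P^\perp)(I_{H^2}\otimes U^* )$, $V_2=(I_{H^2}\otimes U)(M_z\otimes P+I_{H^2}\otimes P^\perp)$ (so $V_1V_2=V_2V_1=M_z\otimes I_{\mathcal{E}}$).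 *)

theory Defs
  imports Complex_Main
begin

class complex_hilbert = ab_group_add +
  fixes scaleC :: "complex \<Rightarrow> 'a \<Rightarrow> 'a" (infixr "*\<^sub>C" 75)
    and cinner :: "'a \<Rightarrow> 'a \<Rightarrow> complex"
  assumes scaleC_add_right: "a *\<^sub>C (x + y) = a *\<^sub>C x + a *\<^sub>C y"
    and scaleC_add_left: "(a + b) *\<^sub>C x = a *\<^sub>C x + b *\<^sub>C x"
    and scaleC_scaleC: "a *\<^sub>C (b *\<^sub>C x) = (a * b) *\<^sub>C x"
    and scaleC_one: "1 *\<^sub>C x = x"
    and cinner_add_left: "cinner (x + y) z = cinner x z + cinner y z"
    and cinner_scaleC_left: "cinner (a *\<^sub>C x) y = a * cinner x y"
    and cinner_commute: "cinner y x = cnj (cinner x y)"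
    and cinner_nonneg: "0 \<le> Re (cinner x x)"
    and cinner_eq_zero: "cinner x x = 0 \<Longrightarrow> x = 0"
    and cinner_complete:
      "(\<forall>e>0. \<exists>N. \<forall>m\<ge>N. \<forall>n\<ge>N. sqrt (Re (cinner (X m - X n) (X m - X n))) < e)
        \<Longrightarrow> \<exists>L. (\<lambda>n. sqrt (Re (cinner (X n - L) (X n - L)))) \<longlonglongrightarrow> 0"

definition cnorm :: "'a::complex_hilbert \<Rightarrow> real" where
  "cnorm x = sqrt (Re (cinner x x))"

definition separable_space :: "'a::complex_hilbert itself \<Rightarrow> bool" where
  "separable_space _ \<longleftrightarrow> (\<exists>d::nat \<Rightarrow> 'a. \<forall>x e. e > 0 \<longrightarrow> (\<exists>k. cnorm (x - d k) < e))"

definition clinear :: "('a::complex_hilbert \<Rightarrow> 'b::complex_hilbert) \<Rightarrow> bool" where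
  "clinear T \<longleftrightarrow> (\<forall>x y. T (x + y) = T x + T y) \<and> (\<forall>a x. T (a *\<^sub>C x) = a *\<^sub>C T x)"

definition unitary :: "('a::complex_hilbert \<Rightarrow> 'a) \<Rightarrow> bool" where
  "unitary U \<longleftrightarrow> clinear U \<and> surj U \<and> (\<forall>x y. cinner (U x) (U y) = cinner x y)"

definition projection :: "('a::complex_hilbert \<Rightarrow> 'a) \<Rightarrow> bool" where
  "projection P \<longleftrightarrow> clinear P \<and> (\<forall>x. P (P x) = P x) \<and> (\<forall>x y. cinner (P x) y = cinner x (P y))"

definition closed_subspace :: "'a::complex_hilbert set \<Rightarrow> bool" where
  "closed_subspace M \<longleftrightarrow> 0 \<in> M \<and> (\<forall>x\<in>M. \<forall>y\<in>M. x + y \<in> M) \<and> (\<forall>a. \<forall>x\<in>M. a *\<^sub>C x \<in> M)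
     \<and> (\<forall>X L. (\<forall>n. X n \<in> M) \<and> (\<lambda>n. cnorm (X n - L)) \<longlonglongrightarrow> 0 \<longrightarrow> L \<in> M)"

definition orth :: "'a::complex_hilbert set \<Rightarrow> 'a set" where
  "orth M = {x. \<forall>y\<in>M. cinner x y = 0}"

definition reducing :: "'a::complex_hilbert set \<Rightarrow> ('a \<Rightarrow> 'a) \<Rightarrow> bool" where
  "reducing M T \<longleftrightarrow> T ` M \<subseteq> M \<and> T ` orth M \<subseteq> orth M"

text \<open>An element of \<open>H\<^sup>2_\<E>(\<D>)\<close> is identified with its sequence of Taylor coefficients
  \<open>f(z) = \<Sum> z\<^sup>n f n\<close>, i.e. \<open>H\<^sup>2_\<E> = {f :: nat \<Rightarrow> \<E>. \<Sum> \<parallel>f n\<parallel>\<^sup>2 < \<infinity>}\<close>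
  with inner product \<open>\<Sum> \<langle>f n, g n\<rangle>\<close>; the tensor \<open>z\<^sup>m \<otimes> \<eta>\<close> is the sequence with \<open>\<eta>\<close> in slot m.\<close>

definition H2 :: "(nat \<Rightarrow> 'e::complex_hilbert) set" where
  "H2 = {f. summable (\<lambda>n. (cnorm (f n))\<^sup>2)}"

definition h2_inner :: "(nat \<Rightarrow> 'e::complex_hilbert) \<Rightarrow> (nat \<Rightarrow> 'e) \<Rightarrow> complex" where
  "h2_inner f g = (\<Sum>n. cinner (f n) (g n))"

definition h2_norm :: "(nat \<Rightarrow> 'e::complex_hilbert) \<Rightarrow> real" where
  "h2_norm f = sqrt (\<Sum>n. (cnorm (f n))\<^sup>2)"

definition H2_sub :: "'e::complex_hilbert set \<Rightarrow> (nat \<Rightarrow> 'e) set" where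
  "H2_sub E' = {f \<in> H2. \<forall>n. f n \<in> E'}"

definition h2_closed_subspace :: "(nat \<Rightarrow> 'e::complex_hilbert) set \<Rightarrow> bool" where
  "h2_closed_subspace S \<longleftrightarrow> S \<subseteq> H2 \<and> (\<lambda>n. 0) \<in> S \<and> (\<forall>f\<in>S. \<forall>g\<in>S. (\<lambda>n. f n + g n) \<in> S)
     \<and> (\<forall>a. \<forall>f\<in>S. (\<lambda>n. a *\<^sub>C f n) \<in> S)
     \<and> (\<forall>X L. (\<forall>k. X k \<in> S) \<and> L \<in> H2 \<and> (\<lambda>k. h2_norm (\<lambda>n. X k n - L n)) \<longlonglongrightarrow> 0 \<longrightarrow> L \<in> S)"

definition h2_orth :: "(nat \<Rightarrow> 'e::complex_hilbert) set \<Rightarrow> (nat \<Rightarrow> 'e) set" where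
  "h2_orth S = {g \<in> H2. \<forall>f\<in>S. h2_inner g f = 0}"

definition h2_reducing :: "(nat \<Rightarrow> 'e::complex_hilbert) set \<Rightarrow> ((nat \<Rightarrow> 'e) \<Rightarrow> (nat \<Rightarrow> 'e)) \<Rightarrow> bool" where
  "h2_reducing S V \<longleftrightarrow> V ` S \<subseteq> S \<and> V ` h2_orth S \<subseteq> h2_orth S"

text \<open>\<open>I \<otimes> A\<close> acts coefficientwise; \<open>M\<^sub>z \<otimes> A\<close> shifts coefficients by one and applies \<open>A\<close>.
  \<open>P\<^sup>\<perp> = I - P\<close> and \<open>U\<^sup>* = U\<^sup>-\<^sup>1\<close> (U unitary).\<close>

definition BCL_V1 :: "('e::complex_hilbert \<Rightarrow> 'e) \<Rightarrow> ('e \<Rightarrow> 'e) \<Rightarrow> (nat \<Rightarrow> 'e) \<Rightarrow> (nat \<Rightarrow> 'e)" where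
  "BCL_V1 U P f = (\<lambda>n. P (inv U (f n))
      + (if n = 0 then 0 else inv U (f (n - 1)) - P (inv U (f (n - 1)))))"

definition BCL_V2 :: "('e::complex_hilbert \<Rightarrow> 'e) \<Rightarrow> ('e \<Rightarrow> 'e) \<Rightarrow> (nat \<Rightarrow> 'e) \<Rightarrow> (nat \<Rightarrow> 'e)" where
  "BCL_V2 U P f = (\<lambda>n. U ((if n = 0 then 0 else P (f (n - 1))) + (f n - P (f n))))"

end

theory Submission
  imports Defs
begin





lemma scaleC_zero_right[simp]: "a *\<^sub>C 0 = 0"
  using scaleC_add_right[of a 0 0] by simp

lemma scaleC_zero_left[simp]: "0 *\<^sub>C x = 0"
  using scaleC_add_left[of 0 0 x] by simp

lemma scaleC_minus_one: "(-1) *\<^sub>C x = - x"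
proof -
  have "(-1) *\<^sub>C x + x = 0" using scaleC_add_left[of "-1" 1 x] by (simp add: scaleC_one)
  thus ?thesis by (simp add: eq_neg_iff_add_eq_0)
qed

lemma scaleC_minus_right: "a *\<^sub>C (- x) = - (a *\<^sub>C x)"
  using scaleC_add_right[of a "-x" x] by (simp add: add_eq_0_iff2)

lemma scaleC_diff_right: "a *\<^sub>C (x - y) = a *\<^sub>C x - a *\<^sub>C y"
  by (simp only: diff_conv_add_uminus scaleC_add_right scaleC_minus_right)

lemma scaleC_minus_left: "(- a) *\<^sub>C x = - (a *\<^sub>C x)"
  using scaleC_add_left[of "-a" a x] by (simp add: add_eq_0_iff2)

lemma scaleC_diff_left: "(a - b) *\<^sub>C x = a *\<^sub>C x - b *\<^sub>C x"
  using scaleC_add_left[of a "-b" x] by (simp add: scaleC_minus_left)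

lemma cinner_zero_left[simp]: "cinner 0 y = 0"
  using cinner_add_left[of 0 0 y] by simp

lemma cinner_zero_right[simp]: "cinner x 0 = 0"
  using cinner_commute[of 0 x] by simp

lemma cinner_add_right: "cinner x (y + z) = cinner x y + cinner x z"
  by (metis cinner_commute cinner_add_left complex_cnj_add)

lemma cinner_scaleC_right: "cinner x (a *\<^sub>C y) = cnj a * cinner x y"
  by (metis cinner_commute cinner_scaleC_left complex_cnj_mult)

lemma cinner_minus_left: "cinner (- x) y = - cinner x y"
  using cinner_add_left[of x "-x" y] by (simp add: add_eq_0_iff2)

lemma cinner_minus_right: "cinner x (- y) = - cinner x y"
  by (metis cinner_commute cinner_minus_left complex_cnj_minus)

lemma cinner_diff_left: "cinner (x - y) z = cinner x z - cinner y z"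
  by (simp only: diff_conv_add_uminus cinner_add_left cinner_minus_left)

lemma cinner_diff_right: "cinner x (y - z) = cinner x y - cinner x z"
  by (simp only: diff_conv_add_uminus cinner_add_right cinner_minus_right)

lemma cinner_self_real: "cinner x x = complex_of_real (Re (cinner x x))"
  using cinner_commute[of x x] by (metis Reals_cnj_iff complex_is_Real_iff of_real_Re)

lemma cinner_self_eq_0[simp]: "cinner x x = 0 \<longleftrightarrow> x = 0"
  using cinner_eq_zero by auto

lemma cnorm_sq: "(cnorm x)\<^sup>2 = Re (cinner x x)"
  unfolding cnorm_def using cinner_nonneg[of x] by simp

lemma cnorm_nonneg: "0 \<le> cnorm x" unfolding cnorm_def using cinner_nonneg[of x] by simp

lemma cnorm_zero[simp]: "cnorm (0::'a::complex_hilbert) = 0" unfolding cnorm_def by simp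

lemma cnorm_eq_0[simp]: "cnorm x = 0 \<longleftrightarrow> x = 0"
  unfolding cnorm_def using cinner_nonneg[of x] cinner_self_real[of x]
  by (metis cinner_self_eq_0 real_sqrt_eq_zero_cancel_iff zero_complex.simps(1) of_real_0)

lemma cinner_self_cnorm: "cinner x x = complex_of_real ((cnorm x)\<^sup>2)"
  using cinner_self_real[of x] cnorm_sq[of x] by simp

lemma cnorm_minus: "cnorm (- x) = cnorm x"
  unfolding cnorm_def by (simp add: cinner_minus_left cinner_minus_right)

lemma cnorm_diff_commute: "cnorm (x - y) = cnorm (y - x)"
  using cnorm_minus[of "x - y"] by simp

lemma cnorm_sq_add: "(cnorm (x + y))\<^sup>2 = (cnorm x)\<^sup>2 + (cnorm y)\<^sup>2 + 2 * Re (cinner x y)"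
proof -
  have "cinner (x+y) (x+y) = cinner x x + cinner y y + (cinner x y + cnj (cinner x y))"
    by (simp add: cinner_add_left cinner_add_right cinner_commute[of y x])
  hence "Re (cinner (x+y) (x+y)) = Re (cinner x x) + Re (cinner y y) + 2 * Re (cinner x y)"
    by simp
  thus ?thesis by (simp add: cnorm_sq)
qed

lemma cnorm_sq_diff: "(cnorm (x - y))\<^sup>2 = (cnorm x)\<^sup>2 + (cnorm y)\<^sup>2 - 2 * Re (cinner x y)"
  using cnorm_sq_add[of x "-y"] by (simp add: cnorm_minus cinner_minus_right)

lemma parallelogram: "(cnorm (x + y))\<^sup>2 + (cnorm (x - y))\<^sup>2 = 2 * (cnorm x)\<^sup>2 + 2 * (cnorm y)\<^sup>2"
  using cnorm_sq_add[of x y] cnorm_sq_diff[of x y] by simp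

lemma cnorm_sq_add_le: "(cnorm (x + y))\<^sup>2 \<le> 2 * (cnorm x)\<^sup>2 + 2 * (cnorm y)\<^sup>2"
  using parallelogram[of x y] by (smt (verit) zero_le_power2)

lemma cnorm_scaleC: "cnorm (a *\<^sub>C x) = cmod a * cnorm x"
proof -
  have "cinner (a *\<^sub>C x) (a *\<^sub>C x) = (a * cnj a) * cinner x x"
    by (simp add: cinner_scaleC_left cinner_scaleC_right)
  also have "a * cnj a = complex_of_real ((cmod a)\<^sup>2)" using complex_norm_square[of a] by simp
  finally have "Re (cinner (a *\<^sub>C x) (a *\<^sub>C x)) = (cmod a)\<^sup>2 * (cnorm x)\<^sup>2"
    by (simp add: cinner_self_cnorm)
  thus ?thesis unfolding cnorm_def
    by (simp add: cnorm_sq[symmetric] real_sqrt_mult cnorm_nonneg)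
qed

lemma proj_line_norm:
  assumes "y \<noteq> 0"
  shows "Re (cinner (x - (cinner x y / cinner y y) *\<^sub>C y) (x - (cinner x y / cinner y y) *\<^sub>C y))
    = (cnorm x)\<^sup>2 - (cmod (cinner x y))\<^sup>2 / (cnorm y)\<^sup>2"
proof -
  define a where "a = cinner x y"
  define n where "n = (cnorm y)\<^sup>2"
  define c where "c = a / complex_of_real n"
  have yy: "cinner y y = complex_of_real n" unfolding n_def by (rule cinner_self_cnorm)
  have ny: "n > 0" unfolding n_def using assms cnorm_nonneg[of y] cnorm_eq_0[of y]
    by (metis less_eq_real_def zero_less_power2)
  have yx: "cinner y x = cnj a" unfolding a_def by (rule cinner_commute)
  have e1: "cinner (x - c *\<^sub>C y) (x - c *\<^sub>C y)
     = cinner x x - cnj c * a - c * cnj a + c * cnj c * complex_of_real n"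
    by (simp add: cinner_diff_left cinner_diff_right cinner_scaleC_left cinner_scaleC_right
        yy yx a_def[symmetric] algebra_simps)
  have cc: "cnj c = cnj a / complex_of_real n" unfolding c_def by simp
  have nz: "complex_of_real n \<noteq> 0" using ny by simp
  have e2: "cnj c * a = a * cnj a / complex_of_real n" "c * cnj a = a * cnj a / complex_of_real n"
    "c * cnj c * complex_of_real n = a * cnj a / complex_of_real n"
    using nz unfolding cc c_def by (simp_all add: field_simps)
  have e3: "a * cnj a = complex_of_real ((cmod a)\<^sup>2)"
    using complex_norm_square[of a] by simp
  have "cinner (x - c *\<^sub>C y) (x - c *\<^sub>C y) = cinner x x - complex_of_real ((cmod a)\<^sup>2 / n)"
    unfolding e1 e2 e3 by simp
  hence "Re (cinner (x - c *\<^sub>C y) (x - c *\<^sub>C y)) = (cnorm x)\<^sup>2 - (cmod a)\<^sup>2 / n"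
    by (simp add: cnorm_sq)
  moreover have "c = cinner x y / cinner y y" unfolding c_def a_def yy ..
  ultimately show ?thesis unfolding a_def n_def by simp
qed

lemma cauchy_schwarz: "cmod (cinner x y) \<le> cnorm x * cnorm y"
proof (cases "y = 0")
  case True thus ?thesis by simp
next
  case False
  define n where "n = (cnorm y)\<^sup>2"
  have ny: "n > 0" unfolding n_def using False cnorm_nonneg[of y] cnorm_eq_0[of y]
    by (metis less_eq_real_def zero_less_power2)
  have "(cmod (cinner x y))\<^sup>2 / n \<le> (cnorm x)\<^sup>2"
    using proj_line_norm[OF False, of x] cinner_nonneg[of "x - (cinner x y / cinner y y) *\<^sub>C y"]
    unfolding n_def by simp
  hence "(cmod (cinner x y))\<^sup>2 \<le> (cnorm x)\<^sup>2 * n" using ny by (simp add: divide_le_eq)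
  hence "(cmod (cinner x y))\<^sup>2 \<le> (cnorm x * cnorm y)\<^sup>2" unfolding n_def by (simp add: power_mult_distrib)
  thus ?thesis using cnorm_nonneg[of x] cnorm_nonneg[of y]
    by (meson mult_nonneg_nonneg power2_le_imp_le)
qed

lemma cnorm_triangle: "cnorm (x + y) \<le> cnorm x + cnorm y"
proof -
  have "Re (cinner x y) \<le> cnorm x * cnorm y"
    using cauchy_schwarz[of x y] abs_Re_le_cmod[of "cinner x y"] by linarith
  hence "(cnorm (x + y))\<^sup>2 \<le> (cnorm x + cnorm y)\<^sup>2"
    by (simp add: cnorm_sq_add power2_sum)
  thus ?thesis using cnorm_nonneg[of x] cnorm_nonneg[of y]
    by (meson add_nonneg_nonneg power2_le_imp_le)
qed




lemma closed_subspace_diff: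
  assumes "closed_subspace M" "x \<in> M" "y \<in> M" shows "x - y \<in> M"
proof -
  have "(-1) *\<^sub>C y \<in> M" using assms unfolding closed_subspace_def by blast
  hence "x + (-1) *\<^sub>C y \<in> M" using assms unfolding closed_subspace_def by blast
  thus ?thesis by (simp add: scaleC_minus_one)
qed

lemma closed_subspace_add: "closed_subspace M \<Longrightarrow> x \<in> M \<Longrightarrow> y \<in> M \<Longrightarrow> x + y \<in> M"
  unfolding closed_subspace_def by blast
lemma closed_subspace_scale: "closed_subspace M \<Longrightarrow> x \<in> M \<Longrightarrow> a *\<^sub>C x \<in> M"
  unfolding closed_subspace_def by blast
lemma closed_subspace_zero: "closed_subspace M \<Longrightarrow> 0 \<in> M"
  unfolding closed_subspace_def by blast

lemma two_scaleC: "(2::complex) *\<^sub>C x = x + x"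
  using scaleC_add_left[of 1 1 x] by (simp add: scaleC_one)

lemma proj_exists:
  fixes M :: "'a::complex_hilbert set"
  assumes M: "closed_subspace M"
  shows "\<exists>m\<in>M. x - m \<in> orth M"
proof -
  define F where "F = (\<lambda>m. (cnorm (x - m))\<^sup>2) ` M"
  define D where "D = Inf F"
  have F0: "F \<noteq> {}" using closed_subspace_zero[OF M] unfolding F_def by blast
  have Fb: "bdd_below F" unfolding F_def by (rule bdd_belowI[of _ 0]) auto
  have lowD: "D \<le> (cnorm (x - m))\<^sup>2" if "m \<in> M" for m
    unfolding D_def F_def using Fb F_def that by (auto intro!: cInf_lower)
  have D0: "0 \<le> D" unfolding D_def using F0 by (rule cInf_greatest) (auto simp: F_def)
  have "\<forall>k. \<exists>m\<in>M. (cnorm (x - m))\<^sup>2 < D + inverse (real (Suc k))"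
  proof
    fix k
    have "Inf F < D + inverse (real (Suc k))" unfolding D_def by simp
    from cInf_lessD[OF F0 this] show "\<exists>m\<in>M. (cnorm (x - m))\<^sup>2 < D + inverse (real (Suc k))"
      unfolding F_def by auto
  qed
  then obtain m where mM: "\<And>k. m k \<in> M" and mlt: "\<And>k. (cnorm (x - m k))\<^sup>2 < D + inverse (real (Suc k))"
    by metis
  have cauchy_sq: "(cnorm (m j - m k))\<^sup>2 \<le> 2 * inverse (real (Suc j)) + 2 * inverse (real (Suc k))" for j k
  proof -
    define mid where "mid = (1/2) *\<^sub>C (m j + m k)"
    have midM: "mid \<in> M" unfolding mid_def using mM M closed_subspace_add closed_subspace_scale by blast
    have "(x - m j) + (x - m k) = (2::complex) *\<^sub>C (x - mid)"
      unfolding mid_def scaleC_diff_right scaleC_scaleC two_scaleC by (simp add: scaleC_one algebra_simps)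
    hence "(cnorm ((x - m j) + (x - m k)))\<^sup>2 = 4 * (cnorm (x - mid))\<^sup>2"
      by (simp add: cnorm_scaleC power_mult_distrib)
    moreover have "(x - m j) - (x - m k) = m k - m j" by simp
    ultimately have "4 * (cnorm (x - mid))\<^sup>2 + (cnorm (m k - m j))\<^sup>2
       = 2 * (cnorm (x - m j))\<^sup>2 + 2 * (cnorm (x - m k))\<^sup>2"
      using parallelogram[of "x - m j" "x - m k"] by simp
    moreover have "D \<le> (cnorm (x - mid))\<^sup>2" using lowD midM by blast
    moreover have "(cnorm (m j - m k))\<^sup>2 = (cnorm (m k - m j))\<^sup>2" using cnorm_diff_commute[of "m j" "m k"] by simp
    ultimately show ?thesis using mlt[of j] mlt[of k] by linarith
  qed
  have "\<exists>L. (\<lambda>n. sqrt (Re (cinner (m n - L) (m n - L)))) \<longlonglongrightarrow> 0"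
  proof (rule cinner_complete, intro allI impI)
    fix e :: real assume e: "e > 0"
    obtain N where N: "inverse (real (Suc N)) < e\<^sup>2 / 4"
      using reals_Archimedean e by (metis divide_pos_pos zero_less_numeral zero_less_power)
    show "\<exists>N. \<forall>p\<ge>N. \<forall>q\<ge>N. sqrt (Re (cinner (m p - m q) (m p - m q))) < e"
    proof (intro exI allI impI)
      fix p q assume p: "p \<ge> N" and q: "q \<ge> N"
      have "inverse (real (Suc p)) \<le> inverse (real (Suc N))" using p by (simp add: le_imp_inverse_le)
      moreover have "inverse (real (Suc q)) \<le> inverse (real (Suc N))" using q by (simp add: le_imp_inverse_le)
      ultimately have "(cnorm (m p - m q))\<^sup>2 < e\<^sup>2" using cauchy_sq[of p q] N by linarith
      hence "cnorm (m p - m q) < e" using e by (simp add: power_less_imp_less_base)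
      thus "sqrt (Re (cinner (m p - m q) (m p - m q))) < e" unfolding cnorm_def .
    qed
  qed
  then obtain L where L: "(\<lambda>n. cnorm (m n - L)) \<longlonglongrightarrow> 0" unfolding cnorm_def by blast
  have LM: "L \<in> M" using M mM L unfolding closed_subspace_def by blast
  have sq_lim: "(\<lambda>k. (cnorm (x - m k))\<^sup>2) \<longlonglongrightarrow> D"
  proof (rule tendsto_sandwich[of "\<lambda>k. D" _ _ "\<lambda>k. D + inverse (real (Suc k))"])
    show "\<forall>\<^sub>F n in sequentially. D \<le> (cnorm (x - m n))\<^sup>2" using lowD mM by auto
    show "\<forall>\<^sub>F n in sequentially. (cnorm (x - m n))\<^sup>2 \<le> D + inverse (real (Suc n))"
      by (rule always_eventually, rule allI, rule less_imp_le, rule mlt)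
    show "(\<lambda>k. D) \<longlonglongrightarrow> D" by simp
    show "(\<lambda>k. D + inverse (real (Suc k))) \<longlonglongrightarrow> D"
      using LIMSEQ_inverse_real_of_nat_add[of D] by simp
  qed
  have "(\<lambda>k. sqrt ((cnorm (x - m k))\<^sup>2)) \<longlonglongrightarrow> sqrt D" by (rule tendsto_real_sqrt[OF sq_lim])
  hence "(\<lambda>k. cnorm (x - m k)) \<longlonglongrightarrow> sqrt D" by (simp add: cnorm_nonneg)
  hence g: "(\<lambda>k. cnorm (x - m k) + cnorm (m k - L)) \<longlonglongrightarrow> sqrt D + 0"
    by (rule tendsto_add[OF _ L])
  have "cnorm (x - L) \<le> sqrt D"
  proof (rule LIMSEQ_le_const[OF g[simplified]], intro exI allI impI)
    fix k
    have "x - L = (x - m k) + (m k - L)" by simp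
    thus "cnorm (x - L) \<le> cnorm (x - m k) + cnorm (m k - L)" using cnorm_triangle by metis
  qed
  hence xL: "(cnorm (x - L))\<^sup>2 \<le> D" using cnorm_nonneg D0
    by (metis real_sqrt_le_iff real_sqrt_pow2 real_sqrt_unique sqrt_le_D)
  have "x - L \<in> orth M"
    unfolding orth_def
  proof (intro CollectI ballI)
    fix y assume yM: "y \<in> M"
    show "cinner (x - L) y = 0"
    proof (cases "y = 0")
      case True thus ?thesis by simp
    next
      case False
      define t where "t = cinner (x - L) y / cinner y y"
      have "L + t *\<^sub>C y \<in> M" using LM yM M closed_subspace_add closed_subspace_scale by blast
      hence "D \<le> (cnorm (x - (L + t *\<^sub>C y)))\<^sup>2" by (rule lowD)
      also have "x - (L + t *\<^sub>C y) = (x - L) - t *\<^sub>C y" by (simp add: algebra_simps)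
      also have "(cnorm \<dots>)\<^sup>2 = (cnorm (x - L))\<^sup>2 - (cmod (cinner (x - L) y))\<^sup>2 / (cnorm y)\<^sup>2"
        unfolding t_def using proj_line_norm[OF False, of "x - L"] by (simp add: cnorm_sq)
      finally have "(cmod (cinner (x - L) y))\<^sup>2 / (cnorm y)\<^sup>2 \<le> 0" using xL by linarith
      moreover have "(cnorm y)\<^sup>2 > 0" using False cnorm_nonneg[of y] cnorm_eq_0[of y]
        by (metis less_eq_real_def zero_less_power2)
      ultimately have "(cmod (cinner (x - L) y))\<^sup>2 \<le> 0" by (simp add: divide_le_0_iff)
      thus ?thesis by simp
    qed
  qed
  thus ?thesis using LM by blast
qed

lemma orth_orth:
  fixes M :: "'a::complex_hilbert set"
  assumes M: "closed_subspace M" and y: "y \<in> orth (orth M)"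
  shows "y \<in> M"
proof -
  obtain m where mM: "m \<in> M" and z: "y - m \<in> orth M" using proj_exists[OF M] by blast
  have "cinner y (y - m) = 0" using y z unfolding orth_def by blast
  moreover have "cinner m (y - m) = 0" using z mM unfolding orth_def
    by (metis (mono_tags, lifting) cinner_commute complex_cnj_zero mem_Collect_eq)
  ultimately have "cinner (y - m) (y - m) = 0" by (simp add: cinner_diff_left)
  hence "y - m = 0" by simp
  thus ?thesis using mM by simp
qed




lemma H2_iff: "f \<in> H2 \<longleftrightarrow> summable (\<lambda>n. (cnorm (f n))\<^sup>2)" unfolding H2_def by simp
lemmas H2_def' = H2_iff

lemma H2_zero: "(\<lambda>n. 0) \<in> H2" unfolding H2_iff by simp

lemma H2_add: assumes "f \<in> H2" "g \<in> H2" shows "(\<lambda>n. f n + g n) \<in> H2"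
proof -
  have "summable (\<lambda>n. 2 * (cnorm (f n))\<^sup>2 + 2 * (cnorm (g n))\<^sup>2)"
    using assms unfolding H2_iff by (auto intro!: summable_add summable_mult)
  thus ?thesis unfolding H2_iff
    by (rule summable_comparison_test'[where N=0]) (simp add: cnorm_sq_add_le)
qed

lemma H2_scale: assumes "f \<in> H2" shows "(\<lambda>n. a *\<^sub>C f n) \<in> H2"
  using assms unfolding H2_iff by (simp add: cnorm_scaleC power_mult_distrib summable_mult)

lemma H2_uminus: assumes "f \<in> H2" shows "(\<lambda>n. - f n) \<in> H2"
  using assms unfolding H2_iff by (simp add: cnorm_minus)

lemma H2_diff: assumes "f \<in> H2" "g \<in> H2" shows "(\<lambda>n. f n - g n) \<in> H2"
  using H2_add[OF assms(1) H2_uminus[OF assms(2)]] by simp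

lemma cinner_le_half: "cmod (cinner x y) \<le> ((cnorm x)\<^sup>2 + (cnorm y)\<^sup>2) / 2"
proof -
  have "cnorm x * cnorm y \<le> ((cnorm x)\<^sup>2 + (cnorm y)\<^sup>2) / 2"
    using sum_squares_bound[of "cnorm x" "cnorm y"] by (simp add: power2_eq_square)
  thus ?thesis using cauchy_schwarz[of x y] by linarith
qed

lemma H2_inner_summable_norm: assumes "f \<in> H2" "g \<in> H2"
  shows "summable (\<lambda>n. cmod (cinner (f n) (g n)))"
proof -
  have "summable (\<lambda>n. ((cnorm (f n))\<^sup>2 + (cnorm (g n))\<^sup>2) / 2)"
    using assms unfolding H2_iff by (auto intro!: summable_add summable_divide)
  thus ?thesis
  proof (rule summable_comparison_test'[where N=0])
    fix n show "norm (cmod (cinner (f n) (g n))) \<le> ((cnorm (f n))\<^sup>2 + (cnorm (g n))\<^sup>2) / 2"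
      using cinner_le_half[of "f n" "g n"] by simp
  qed
qed

lemma H2_inner_summable: "f \<in> H2 \<Longrightarrow> g \<in> H2 \<Longrightarrow> summable (\<lambda>n. cinner (f n) (g n))"
  by (rule summable_norm_cancel) (simp add: H2_inner_summable_norm)

lemma h2_inner_self: assumes "f \<in> H2"
  shows "h2_inner f f = complex_of_real (\<Sum>n. (cnorm (f n))\<^sup>2)"
proof -
  have "h2_inner f f = (\<Sum>n. complex_of_real ((cnorm (f n))\<^sup>2))"
    unfolding h2_inner_def by (simp only: cinner_self_cnorm)
  also have "\<dots> = complex_of_real (\<Sum>n. (cnorm (f n))\<^sup>2)"
    using assms unfolding H2_iff by (rule suminf_of_real[symmetric])
  finally show ?thesis .
qed

lemma h2_norm_nonneg_sum: "f \<in> H2 \<Longrightarrow> 0 \<le> (\<Sum>n. (cnorm (f n))\<^sup>2)"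
  unfolding H2_iff by (rule suminf_nonneg) auto

lemma h2_norm_nonneg: "f \<in> H2 \<Longrightarrow> 0 \<le> h2_norm f"
  unfolding h2_norm_def using h2_norm_nonneg_sum by simp

lemma h2_norm_sq: "f \<in> H2 \<Longrightarrow> (h2_norm f)\<^sup>2 = (\<Sum>n. (cnorm (f n))\<^sup>2)"
  unfolding h2_norm_def using h2_norm_nonneg_sum by simp

lemma cnorm_reverse_triangle: "\<bar>cnorm a - cnorm b\<bar> \<le> cnorm (a - b)"
proof -
  have "cnorm a \<le> cnorm (a - b) + cnorm b" using cnorm_triangle[of "a - b" b] by simp
  moreover have "cnorm b \<le> cnorm (b - a) + cnorm a" using cnorm_triangle[of "b - a" a] by simp
  ultimately show ?thesis using cnorm_diff_commute[of a b] by linarith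
qed

lemma H2_complete:
  assumes Y: "\<And>k. Y k \<in> H2"
    and C: "\<forall>e>0. \<exists>N. \<forall>m\<ge>N. \<forall>n\<ge>N. h2_norm (\<lambda>i. Y m i - Y n i) < e"
  shows "\<exists>L\<in>H2. (\<lambda>k. h2_norm (\<lambda>i. Y k i - L i)) \<longlonglongrightarrow> 0"
proof -
  have Ydiff: "(\<lambda>i. Y m i - Y n i) \<in> H2" for m n by (rule H2_diff[OF Y Y])
  have coord: "(cnorm (Y m i - Y n i))\<^sup>2 \<le> (h2_norm (\<lambda>i. Y m i - Y n i))\<^sup>2" for m n i
  proof -
    have "sum (\<lambda>i. (cnorm (Y m i - Y n i))\<^sup>2) {i} \<le> (\<Sum>i. (cnorm (Y m i - Y n i))\<^sup>2)"
      using Ydiff[of m n] unfolding H2_iff by (intro sum_le_suminf) auto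
    thus ?thesis using h2_norm_sq[OF Ydiff[of m n]] by simp
  qed
  have "\<exists>l. (\<lambda>k. cnorm (Y k i - l)) \<longlonglongrightarrow> 0" for i
  proof -
    have "\<exists>l. (\<lambda>k. sqrt (Re (cinner (Y k i - l) (Y k i - l)))) \<longlonglongrightarrow> 0"
    proof (rule cinner_complete, intro allI impI)
      fix e :: real assume "e > 0"
      then obtain N where N: "\<forall>m\<ge>N. \<forall>n\<ge>N. h2_norm (\<lambda>i. Y m i - Y n i) < e" using C by blast
      show "\<exists>N. \<forall>m\<ge>N. \<forall>n\<ge>N. sqrt (Re (cinner (Y m i - Y n i) (Y m i - Y n i))) < e"
      proof (intro exI allI impI)
        fix m n assume "m \<ge> N" "n \<ge> N"
        hence "h2_norm (\<lambda>i. Y m i - Y n i) < e" using N by blast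
        moreover have "cnorm (Y m i - Y n i) \<le> h2_norm (\<lambda>i. Y m i - Y n i)"
          using power2_le_imp_le[OF coord[where m=m and n=n and i=i] h2_norm_nonneg[OF Ydiff]] .
        ultimately show "sqrt (Re (cinner (Y m i - Y n i) (Y m i - Y n i))) < e"
          unfolding cnorm_def by linarith
      qed
    qed
    thus ?thesis unfolding cnorm_def .
  qed
  then obtain L where L: "\<And>i. (\<lambda>k. cnorm (Y k i - L i)) \<longlonglongrightarrow> 0" by metis
  have lim_coord: "(\<lambda>m. cnorm (Y k i - Y m i)) \<longlonglongrightarrow> cnorm (Y k i - L i)" for k i
  proof (rule tendsto_sandwich[of "\<lambda>m. cnorm (Y k i - L i) - cnorm (Y m i - L i)" _ _
        "\<lambda>m. cnorm (Y k i - L i) + cnorm (Y m i - L i)"])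
    have "\<bar>cnorm (Y k i - Y m i) - cnorm (Y k i - L i)\<bar> \<le> cnorm (Y m i - L i)" for m
      using cnorm_reverse_triangle[of "Y k i - Y m i" "Y k i - L i"] cnorm_diff_commute[of "L i" "Y m i"]
      by (simp add: algebra_simps)
    thus "\<forall>\<^sub>F m in sequentially. cnorm (Y k i - L i) - cnorm (Y m i - L i) \<le> cnorm (Y k i - Y m i)"
      "\<forall>\<^sub>F m in sequentially. cnorm (Y k i - Y m i) \<le> cnorm (Y k i - L i) + cnorm (Y m i - L i)"
      by (auto intro!: always_eventually simp: abs_le_iff) (smt (verit))+
    show "(\<lambda>m. cnorm (Y k i - L i) - cnorm (Y m i - L i)) \<longlonglongrightarrow> cnorm (Y k i - L i)"
      using tendsto_diff[OF tendsto_const L[of i]] by simp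
    show "(\<lambda>m. cnorm (Y k i - L i) + cnorm (Y m i - L i)) \<longlonglongrightarrow> cnorm (Y k i - L i)"
      using tendsto_add[OF tendsto_const L[of i]] by simp
  qed
  have key: "\<exists>N. \<forall>k\<ge>N. (\<lambda>i. Y k i - L i) \<in> H2 \<and> (\<Sum>i. (cnorm (Y k i - L i))\<^sup>2) \<le> e\<^sup>2"
    if e: "e > 0" for e
  proof -
    obtain N where N: "\<forall>m\<ge>N. \<forall>n\<ge>N. h2_norm (\<lambda>i. Y m i - Y n i) < e" using C e by blast
    have part: "sum (\<lambda>i. (cnorm (Y k i - L i))\<^sup>2) {..<M} \<le> e\<^sup>2" if k: "k \<ge> N" for k M
    proof (rule LIMSEQ_le_const2)
      show "(\<lambda>m. sum (\<lambda>i. (cnorm (Y k i - Y m i))\<^sup>2) {..<M}) \<longlonglongrightarrow> sum (\<lambda>i. (cnorm (Y k i - L i))\<^sup>2) {..<M}"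
        by (intro tendsto_sum tendsto_power lim_coord)
      show "\<exists>N'. \<forall>m\<ge>N'. sum (\<lambda>i. (cnorm (Y k i - Y m i))\<^sup>2) {..<M} \<le> e\<^sup>2"
      proof (intro exI allI impI)
        fix m assume m: "m \<ge> N"
        have "sum (\<lambda>i. (cnorm (Y k i - Y m i))\<^sup>2) {..<M} \<le> (\<Sum>i. (cnorm (Y k i - Y m i))\<^sup>2)"
          using Ydiff[of k m] unfolding H2_iff by (intro sum_le_suminf) auto
        also have "\<dots> = (h2_norm (\<lambda>i. Y k i - Y m i))\<^sup>2" using h2_norm_sq[OF Ydiff[of k m]] by simp
        also have "\<dots> \<le> e\<^sup>2"
        proof -
          have "h2_norm (\<lambda>i. Y k i - Y m i) < e" using N k m by blast
          thus ?thesis using h2_norm_nonneg[OF Ydiff[of k m]] by (simp add: power_mono)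
        qed
        finally show "sum (\<lambda>i. (cnorm (Y k i - Y m i))\<^sup>2) {..<M} \<le> e\<^sup>2" .
      qed
    qed
    show ?thesis
    proof (intro exI allI impI conjI)
      fix k assume k: "k \<ge> N"
      show sk: "(\<lambda>i. Y k i - L i) \<in> H2" unfolding H2_iff
        by (rule summableI_nonneg_bounded[where x="e\<^sup>2"]) (auto intro: part[OF k])
      show "(\<Sum>i. (cnorm (Y k i - L i))\<^sup>2) \<le> e\<^sup>2"
        using sk unfolding H2_iff by (rule suminf_le_const) (auto intro: part[OF k])
    qed
  qed
  obtain N1 where N1: "\<forall>k\<ge>N1. (\<lambda>i. Y k i - L i) \<in> H2" using key[of 1] by auto
  have b: "(\<lambda>i. Y N1 i - L i) \<in> H2" using N1 by auto
  have "(\<lambda>i. Y N1 i - (Y N1 i - L i)) \<in> H2" by (rule H2_diff[OF Y b])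
  moreover have "(\<lambda>i. Y N1 i - (Y N1 i - L i)) = L" by (rule ext) simp
  ultimately have LH: "L \<in> H2" by simp
  have "(\<lambda>k. h2_norm (\<lambda>i. Y k i - L i)) \<longlonglongrightarrow> 0"
  proof (rule LIMSEQ_I)
    fix r :: real assume r: "r > 0"
    obtain N where N: "\<forall>k\<ge>N. (\<lambda>i. Y k i - L i) \<in> H2 \<and> (\<Sum>i. (cnorm (Y k i - L i))\<^sup>2) \<le> (r/2)\<^sup>2"
      using key[of "r/2"] r by auto
    show "\<exists>no. \<forall>n\<ge>no. norm (h2_norm (\<lambda>i. Y n i - L i) - 0) < r"
    proof (intro exI allI impI)
      fix k assume "k \<ge> N"
      hence kH: "(\<lambda>i. Y k i - L i) \<in> H2" using N by blast
      from \<open>k \<ge> N\<close> have "(\<Sum>i. (cnorm (Y k i - L i))\<^sup>2) \<le> (r/2)\<^sup>2" using N by blast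
      hence "sqrt (\<Sum>i. (cnorm (Y k i - L i))\<^sup>2) \<le> sqrt ((r/2)\<^sup>2)" by (rule real_sqrt_le_mono)
      hence "h2_norm (\<lambda>i. Y k i - L i) \<le> r/2" unfolding h2_norm_def using r by simp
      moreover have "0 \<le> h2_norm (\<lambda>i. Y k i - L i)" by (rule h2_norm_nonneg[OF kH])
      ultimately show "norm (h2_norm (\<lambda>i. Y k i - L i) - 0) < r" using r by simp
    qed
  qed
  thus ?thesis using LH by blast
qed




typedef (overloaded) ('e::complex_hilbert) l2 = "H2 :: (nat \<Rightarrow> 'e) set"
  morphisms vec mk
  using H2_zero by blast

lemma l2_eqI: "(\<And>n. vec x n = vec y n) \<Longrightarrow> x = y"
  by (metis ext vec_inject)

lemma vec_H2[simp]: "vec x \<in> H2" using vec by blast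

instantiation l2 :: (complex_hilbert) complex_hilbert
begin

definition zero_l2 where "0 = mk (\<lambda>n. 0)"
definition plus_l2 where "x + y = mk (\<lambda>n. vec x n + vec y n)"
definition uminus_l2 where "- x = mk (\<lambda>n. - vec x n)"
definition minus_l2 where "x - y = mk (\<lambda>n. vec x n - vec y n)"
definition scaleC_l2 :: "complex \<Rightarrow> 'a l2 \<Rightarrow> 'a l2" where "scaleC_l2 a x = mk (\<lambda>n. a *\<^sub>C vec x n)"
definition cinner_l2 :: "'a l2 \<Rightarrow> 'a l2 \<Rightarrow> complex" where "cinner_l2 x y = h2_inner (vec x) (vec y)"

lemma vec_zero[simp]: "vec (0::'a l2) n = 0"
  unfolding zero_l2_def by (simp add: mk_inverse[OF H2_zero])
lemma vec_plus[simp]: "vec (x + y) n = vec x n + vec y n"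
  unfolding plus_l2_def by (simp add: mk_inverse[OF H2_add[OF vec_H2 vec_H2]])
lemma vec_uminus[simp]: "vec (- x) n = - vec x n"
  unfolding uminus_l2_def by (simp add: mk_inverse[OF H2_uminus[OF vec_H2]])
lemma vec_minus[simp]: "vec (x - y) n = vec x n - vec y n"
  unfolding minus_l2_def by (simp add: mk_inverse[OF H2_diff[OF vec_H2 vec_H2]])
lemma vec_scaleC[simp]: "vec (scaleC a x) n = a *\<^sub>C vec x n"
  unfolding scaleC_l2_def by (simp add: mk_inverse[OF H2_scale[OF vec_H2]])

lemma cinner_l2_self: "Re (cinner x (x::'a l2)) = (\<Sum>n. (cnorm (vec x n))\<^sup>2)"
  unfolding cinner_l2_def using h2_inner_self[OF vec_H2[of x]] by simp

lemma l2_add_assoc: "a + b + c = a + (b + (c::'a l2))" by (rule l2_eqI) (simp add: add.assoc)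
lemma l2_add_commute: "a + b = b + (a::'a l2)" by (rule l2_eqI) (simp add: add.commute)
lemma l2_add_0: "0 + a = (a::'a l2)" by (rule l2_eqI) simp
lemma l2_left_minus: "- a + a = (0::'a l2)" by (rule l2_eqI) simp
lemma l2_diff: "a - b = a + - (b::'a l2)" by (rule l2_eqI) simp
lemma l2_1: "scaleC a (x + y) = scaleC a x + scaleC a (y::'a l2)" by (rule l2_eqI) (simp add: scaleC_add_right)
lemma l2_2: "scaleC (a + b) x = scaleC a x + scaleC b (x::'a l2)" by (rule l2_eqI) (simp add: scaleC_add_left)
lemma l2_3: "scaleC a (scaleC b x) = scaleC (a * b) (x::'a l2)" by (rule l2_eqI) (simp add: scaleC_scaleC)
lemma l2_4: "scaleC 1 x = (x::'a l2)" by (rule l2_eqI) (simp add: scaleC_one)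
lemma l2_5: "cinner (x + y) z = cinner x z + cinner y (z::'a l2)"
    unfolding cinner_l2_def h2_inner_def
    by (simp add: cinner_add_left suminf_add H2_inner_summable)
lemma l2_6: "cinner (scaleC a x) y = a * cinner x (y::'a l2)"
    unfolding cinner_l2_def h2_inner_def
    by (simp add: cinner_scaleC_left suminf_mult H2_inner_summable)
lemma l2_7: "cinner y x = cnj (cinner x (y::'a l2))"
proof -
  have "(\<lambda>n. cinner (vec x n) (vec y n)) sums (\<Sum>n. cinner (vec x n) (vec y n))"
    using H2_inner_summable[OF vec_H2 vec_H2] by (rule summable_sums)
  hence "(\<lambda>n. cnj (cinner (vec x n) (vec y n))) sums cnj (\<Sum>n. cinner (vec x n) (vec y n))"
    by (simp add: sums_cnj)
  hence e: "(\<Sum>n. cnj (cinner (vec x n) (vec y n))) = cnj (\<Sum>n. cinner (vec x n) (vec y n))"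
    by (rule sums_unique[symmetric])
  have "(\<lambda>n. cinner (vec y n) (vec x n)) = (\<lambda>n. cnj (cinner (vec x n) (vec y n)))"
    by (rule ext) (rule cinner_commute)
  thus "cinner y x = cnj (cinner x y)"
    unfolding cinner_l2_def h2_inner_def using e by simp
qed
lemma l2_8: "0 \<le> Re (cinner x (x::'a l2))"
  unfolding cinner_l2_self by (rule suminf_nonneg) (use vec_H2 in \<open>auto simp: H2_iff\<close>)
lemma l2_9: "cinner x x = 0 \<Longrightarrow> x = (0::'a l2)"
proof -
  assume "cinner x x = 0"
  hence "(\<Sum>n. (cnorm (vec x n))\<^sup>2) = 0" using cinner_l2_self[of x] by simp
  hence "\<forall>n. (cnorm (vec x n))\<^sup>2 = 0" using vec_H2[of x] unfolding H2_iff
    by (subst (asm) suminf_eq_zero_iff) auto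
  thus "x = 0" by (intro l2_eqI) simp
qed
lemma l2_10: "\<forall>e>0. \<exists>N. \<forall>m\<ge>N. \<forall>n\<ge>N. sqrt (Re (cinner (X m - X n) (X m - X n))) < e
   \<Longrightarrow> \<exists>L. (\<lambda>n. sqrt (Re (cinner (X n - L) (X n - (L::'a l2))))) \<longlonglongrightarrow> 0"
proof -
  have nrm: "sqrt (Re (cinner (X m - z) (X m - z))) = h2_norm (\<lambda>i. vec (X m) i - vec z i)" for m z
    unfolding cinner_l2_self h2_norm_def by simp
  assume C: "\<forall>e>0. \<exists>N. \<forall>m\<ge>N. \<forall>n\<ge>N. sqrt (Re (cinner (X m - X n) (X m - X n))) < e"
  hence "\<forall>e>0. \<exists>N. \<forall>m\<ge>N. \<forall>n\<ge>N. h2_norm (\<lambda>i. vec (X m) i - vec (X n) i) < e"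
    by (simp add: nrm)
  from H2_complete[of "\<lambda>k. vec (X k)", OF vec_H2 this]
  obtain L where LH: "L \<in> H2" and L: "(\<lambda>k. h2_norm (\<lambda>i. vec (X k) i - L i)) \<longlonglongrightarrow> 0" by blast
  have "vec (mk L) = L" using LH by (simp add: mk_inverse)
  hence "(\<lambda>n. sqrt (Re (cinner (X n - mk L) (X n - mk L)))) \<longlonglongrightarrow> 0" using L by (simp add: nrm)
  thus "\<exists>L. (\<lambda>n. sqrt (Re (cinner (X n - L) (X n - L)))) \<longlonglongrightarrow> 0" by blast

qed

instance by intro_classes (fact l2_add_assoc l2_add_commute l2_add_0 l2_left_minus l2_diff l2_1 l2_2 l2_3 l2_4 l2_5 l2_6 l2_7 l2_8 l2_9 l2_10)+

end

lemma cnorm_l2: "cnorm (x :: 'a::complex_hilbert l2) = h2_norm (vec x)"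
  unfolding cnorm_def cinner_l2_self h2_norm_def by simp




section \<open>Linear maps, unitaries, projections\<close>

lemma vec_zero_fun: "vec (0::'a::complex_hilbert l2) = (\<lambda>n. 0)" by (rule ext) simp
lemma vec_plus_fun: "vec (x + y) = (\<lambda>n. vec x n + vec y n)" by (rule ext) simp
lemma vec_minus_fun: "vec (x - y) = (\<lambda>n. vec x n - vec y n)" by (rule ext) simp
lemma vec_scaleC_fun: "vec (a *\<^sub>C x) = (\<lambda>n. a *\<^sub>C vec x n)" by (rule ext) simp

lemma clinear_add: "clinear T \<Longrightarrow> T (x + y) = T x + T y" unfolding clinear_def by blast

lemma clinear_zero: assumes "clinear T" shows "T 0 = 0"
  using clinear_add[OF assms, of 0 0] by simp

lemma clinear_diff: assumes "clinear T" shows "T (x - y) = T x - T y"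
  using clinear_add[OF assms, of "x - y" y] by (simp add: eq_diff_eq)

lemma unitary_clinear: "unitary U \<Longrightarrow> clinear U" unfolding unitary_def by blast
lemma unitary_surj: "unitary U \<Longrightarrow> surj U" unfolding unitary_def by blast
lemma unitary_iso: "unitary U \<Longrightarrow> cinner (U x) (U y) = cinner x y" unfolding unitary_def by blast

lemma unitary_inj: assumes U: "unitary U" shows "inj U"
proof (rule injI)
  fix x y assume "U x = U y"
  hence "U (x - y) = 0" using clinear_diff[OF unitary_clinear[OF U]] by simp
  hence "cinner (x - y) (x - y) = 0" using unitary_iso[OF U, of "x - y" "x - y"] by simp
  thus "x = y" by simp
qed

lemma unitary_inv_left[simp]: "unitary U \<Longrightarrow> inv U (U x) = x"
  using unitary_inj inv_f_f by metis
lemma unitary_inv_right[simp]: "unitary U \<Longrightarrow> U (inv U x) = x"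
  using unitary_surj surj_f_inv_f by metis

lemma unitary_inv_zero: "unitary U \<Longrightarrow> inv U 0 = 0"
  using unitary_inv_left[of U 0] clinear_zero[OF unitary_clinear] by metis

lemma unitary_inv_adj: "unitary U \<Longrightarrow> cinner (inv U x) y = cinner x (U y)"
  using unitary_iso[of U "inv U x" y] by simp

lemma unitary_cnorm: "unitary U \<Longrightarrow> cnorm (U x) = cnorm x"
  unfolding cnorm_def by (simp add: unitary_iso)

lemma unitary_inv_cnorm: "unitary U \<Longrightarrow> cnorm (inv U x) = cnorm x"
  using unitary_cnorm[of U "inv U x"] by simp

lemma proj_clinear: "projection P \<Longrightarrow> clinear P" unfolding projection_def by blast
lemma proj_idem: "projection P \<Longrightarrow> P (P x) = P x" unfolding projection_def by blast
lemma proj_sa: "projection P \<Longrightarrow> cinner (P x) y = cinner x (P y)" unfolding projection_def by blast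

lemma proj_pythag: assumes P: "projection P"
  shows "(cnorm x)\<^sup>2 = (cnorm (P x))\<^sup>2 + (cnorm (x - P x))\<^sup>2"
proof -
  have "cinner (P x) (x - P x) = 0"
    using proj_sa[OF P, of x "P x"] proj_idem[OF P, of x] proj_sa[OF P, of x x]
    by (simp add: cinner_diff_right)
  thus ?thesis using cnorm_sq_add[of "P x" "x - P x"] by simp
qed

lemma proj_le: "projection P \<Longrightarrow> (cnorm (P x))\<^sup>2 \<le> (cnorm x)\<^sup>2"
  using proj_pythag[of P x] by simp
lemma proj_le': "projection P \<Longrightarrow> (cnorm (x - P x))\<^sup>2 \<le> (cnorm x)\<^sup>2"
  using proj_pythag[of P x] by simp

lemma orth_zero: "0 \<in> orth M" unfolding orth_def by simp
lemma orth_add: "x \<in> orth M \<Longrightarrow> y \<in> orth M \<Longrightarrow> x + y \<in> orth M"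
  unfolding orth_def by (simp add: cinner_add_left)
lemma orth_diff: "x \<in> orth M \<Longrightarrow> y \<in> orth M \<Longrightarrow> x - y \<in> orth M"
  unfolding orth_def by (simp add: cinner_diff_left)

section \<open>Sequence operators\<close>

definition sh :: "(nat \<Rightarrow> 'e::complex_hilbert) \<Rightarrow> nat \<Rightarrow> 'e" where
  "sh f = (\<lambda>n. if n = 0 then 0 else f (n - 1))"
definition bsh :: "(nat \<Rightarrow> 'e::complex_hilbert) \<Rightarrow> nat \<Rightarrow> 'e" where
  "bsh f = (\<lambda>n. f (Suc n))"
definition ev :: "nat \<Rightarrow> 'e::complex_hilbert \<Rightarrow> nat \<Rightarrow> 'e" where
  "ev m x = (\<lambda>n. if n = m then x else 0)"

lemma summable_shift: "summable a \<Longrightarrow> summable (\<lambda>n. if n = 0 then 0 else a (n - 1) :: real)"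
  by (subst summable_Suc_iff[symmetric]) simp

lemma sh_H2: assumes "f \<in> H2" shows "sh f \<in> H2"
proof -
  have "(\<lambda>n. (cnorm (sh f n))\<^sup>2) = (\<lambda>n. if n = 0 then 0 else (cnorm (f (n - 1)))\<^sup>2)"
    by (rule ext) (simp add: sh_def)
  thus ?thesis using assms summable_shift[of "\<lambda>n. (cnorm (f n))\<^sup>2"] unfolding H2_iff by simp
qed

lemma bsh_H2: "f \<in> H2 \<Longrightarrow> bsh f \<in> H2"
  unfolding H2_iff bsh_def using summable_Suc_iff[of "\<lambda>n. (cnorm (f n))\<^sup>2"] by simp

lemma ev_H2: "ev m x \<in> H2"
proof -
  have "summable (\<lambda>n. if n = m then (cnorm x)\<^sup>2 else 0)"
    using sums_single[of m "\<lambda>n. (cnorm x)\<^sup>2"] by (simp add: sums_summable)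
  moreover have "(\<lambda>n. (cnorm (ev m x n))\<^sup>2) = (\<lambda>n. if n = m then (cnorm x)\<^sup>2 else 0)"
    by (rule ext) (simp add: ev_def)
  ultimately show ?thesis unfolding H2_iff by simp
qed

lemma h2_inner_ev_right: "h2_inner g (ev m x) = cinner (g m) x"
proof -
  have "(\<lambda>n. cinner (g n) (ev m x n)) = (\<lambda>n. if n = m then cinner (g m) x else 0)"
    unfolding ev_def by auto
  thus ?thesis unfolding h2_inner_def using sums_single[of m "\<lambda>n. cinner (g m) x"]
    by (simp add: sums_unique[symmetric])
qed

lemma h2_inner_ev_left: "h2_inner (ev m x) g = cinner x (g m)"
proof -
  have "(\<lambda>n. cinner (ev m x n) (g n)) = (\<lambda>n. if n = m then cinner x (g m) else 0)"
    unfolding ev_def by auto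
  thus ?thesis unfolding h2_inner_def using sums_single[of m "\<lambda>n. cinner x (g m)"]
    by (simp add: sums_unique[symmetric])
qed

lemma h2_inner_l2: "f \<in> H2 \<Longrightarrow> g \<in> H2 \<Longrightarrow> h2_inner f g = cinner (mk f) (mk g)"
  by (simp add: cinner_l2_def mk_inverse)

lemma h2_inner_commute: "f \<in> H2 \<Longrightarrow> g \<in> H2 \<Longrightarrow> h2_inner f g = cnj (h2_inner g f)"
  by (simp add: h2_inner_l2 cinner_commute[of "mk f" "mk g"])

lemma h2_inner_bsh: assumes "f \<in> H2" "g \<in> H2"
  shows "h2_inner (bsh f) g = h2_inner f (sh g)"
proof -
  have s: "summable (\<lambda>n. cinner (f n) (sh g n))" using H2_inner_summable[OF assms(1) sh_H2[OF assms(2)]] .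
  have "h2_inner f (sh g) = (\<Sum>n. cinner (f (Suc n)) (sh g (Suc n))) + cinner (f 0) (sh g 0)"
    unfolding h2_inner_def using suminf_split_head[OF s] by simp
  thus ?thesis unfolding h2_inner_def bsh_def sh_def by simp
qed

lemma h2_norm_ev0: "h2_norm (\<lambda>n. ev 0 x n - ev 0 y n) = cnorm (x - y)"
proof -
  have "(\<lambda>n. (cnorm (ev 0 x n - ev 0 y n))\<^sup>2) = (\<lambda>n. if n = 0 then (cnorm (x - y))\<^sup>2 else 0)"
    unfolding ev_def by auto
  hence "(\<Sum>n. (cnorm (ev 0 x n - ev 0 y n))\<^sup>2) = (cnorm (x - y))\<^sup>2"
    using sums_single[of 0 "\<lambda>n. (cnorm (x - y))\<^sup>2"] by (simp add: sums_unique[symmetric])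
  thus ?thesis unfolding h2_norm_def by (simp add: cnorm_nonneg)
qed

lemma tail_lim: assumes "summable (a :: nat \<Rightarrow> real)"
  shows "(\<lambda>N. \<Sum>n. if n < N then 0 else a n) \<longlonglongrightarrow> 0"
proof -
  have eq: "(\<Sum>n. if n < N then 0 else a n) = suminf a - sum a {..<N}" for N
  proof -
    define c where "c = (\<lambda>n. if n < N then 0 else a n)"
    have "summable (\<lambda>n. c (n + N))" unfolding c_def using assms by (simp add: summable_iff_shift)
    hence sc: "summable c" by (simp add: summable_iff_shift)
    have "suminf c = (\<Sum>n. c (n + N)) + sum c {..<N}" by (rule suminf_split_initial_segment[OF sc])
    also have "sum c {..<N} = 0" unfolding c_def by simp
    also have "(\<lambda>n. c (n + N)) = (\<lambda>n. a (n + N))" unfolding c_def by auto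
    finally have "suminf c = (\<Sum>n. a (n + N))" by simp
    moreover have "suminf a = (\<Sum>n. a (n + N)) + sum a {..<N}" by (rule suminf_split_initial_segment[OF assms])
    ultimately show ?thesis unfolding c_def by simp
  qed
  show ?thesis unfolding eq using tendsto_diff[OF tendsto_const summable_LIMSEQ[OF assms], of "suminf a"]
    by simp
qed

section \<open>The BCL operators\<close>

lemma V1V2: assumes U: "unitary U" and P: "projection P"
  shows "BCL_V1 U P (BCL_V2 U P f) = sh f"
proof (rule ext)
  fix n
  have PL: "clinear P" using P by (rule proj_clinear)
  define g where "g = (\<lambda>n. (if n = 0 then 0 else P (f (n - 1))) + (f n - P (f n)))"
  have iv: "inv U (BCL_V2 U P f n) = g n" for n unfolding BCL_V2_def g_def using U by simp
  have Pg: "P (g n) = (if n = 0 then 0 else P (f (n - 1)))" for n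
    unfolding g_def using clinear_add[OF PL] clinear_diff[OF PL] clinear_zero[OF PL] proj_idem[OF P]
    by simp
  have gm: "g n - P (g n) = f n - P (f n)" for n unfolding Pg unfolding g_def by simp
  have e: "BCL_V1 U P (BCL_V2 U P f) n = P (g n) + (if n = 0 then 0 else g (n - 1) - P (g (n - 1)))"
    unfolding BCL_V1_def iv ..
  show "BCL_V1 U P (BCL_V2 U P f) n = sh f n"
  proof (cases n)
    case 0 thus ?thesis unfolding e sh_def using Pg[of 0] by simp
  next
    case (Suc k)
    have a: "P (g n) = P (f k)" using Pg[of n] Suc by simp
    show ?thesis unfolding e sh_def a using gm[of k] Suc by simp
  qed
qed

lemma V1_H2: assumes U: "unitary U" and P: "projection P" and f: "f \<in> H2"
  shows "BCL_V1 U P f \<in> H2"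
proof -
  have a: "summable (\<lambda>n. (cnorm (f n))\<^sup>2)" using f by (simp add: H2_iff)
  have "summable (\<lambda>n. 2 * (cnorm (f n))\<^sup>2 + 2 * (if n = 0 then 0 else (cnorm (f (n - 1)))\<^sup>2))"
    using summable_shift[OF a] a by (intro summable_add summable_mult)
  thus ?thesis unfolding H2_iff
  proof (rule summable_comparison_test'[where N=0])
    fix n
    let ?a = "P (inv U (f n))" and ?b = "(if n = 0 then 0 else inv U (f (n - 1)) - P (inv U (f (n - 1))))"
    have "(cnorm (?a + ?b))\<^sup>2 \<le> 2 * (cnorm ?a)\<^sup>2 + 2 * (cnorm ?b)\<^sup>2" by (rule cnorm_sq_add_le)
    moreover have "(cnorm ?a)\<^sup>2 \<le> (cnorm (f n))\<^sup>2"
      using proj_le[OF P, of "inv U (f n)"] unitary_inv_cnorm[OF U] by simp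
    moreover have "(cnorm ?b)\<^sup>2 \<le> (if n = 0 then 0 else (cnorm (f (n - 1)))\<^sup>2)"
      using proj_le'[OF P, of "inv U (f (n - 1))"] unitary_inv_cnorm[OF U] by simp
    ultimately show "norm ((cnorm (BCL_V1 U P f n))\<^sup>2) \<le>
      2 * (cnorm (f n))\<^sup>2 + 2 * (if n = 0 then 0 else (cnorm (f (n - 1)))\<^sup>2)"
      unfolding BCL_V1_def by simp
  qed
qed

lemma V2_H2: assumes U: "unitary U" and P: "projection P" and f: "f \<in> H2"
  shows "BCL_V2 U P f \<in> H2"
proof -
  have a: "summable (\<lambda>n. (cnorm (f n))\<^sup>2)" using f by (simp add: H2_iff)
  have "summable (\<lambda>n. 2 * (if n = 0 then 0 else (cnorm (f (n - 1)))\<^sup>2) + 2 * (cnorm (f n))\<^sup>2)"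
    using summable_shift[OF a] a by (intro summable_add summable_mult)
  thus ?thesis unfolding H2_iff
  proof (rule summable_comparison_test'[where N=0])
    fix n
    let ?a = "(if n = 0 then 0 else P (f (n - 1)))" and ?b = "f n - P (f n)"
    have "(cnorm (?a + ?b))\<^sup>2 \<le> 2 * (cnorm ?a)\<^sup>2 + 2 * (cnorm ?b)\<^sup>2" by (rule cnorm_sq_add_le)
    moreover have "(cnorm ?b)\<^sup>2 \<le> (cnorm (f n))\<^sup>2" using proj_le'[OF P] by simp
    moreover have "(cnorm ?a)\<^sup>2 \<le> (if n = 0 then 0 else (cnorm (f (n - 1)))\<^sup>2)"
      using proj_le[OF P, of "f (n - 1)"] by simp
    ultimately show "norm ((cnorm (BCL_V2 U P f n))\<^sup>2) \<le>
      2 * (if n = 0 then 0 else (cnorm (f (n - 1)))\<^sup>2) + 2 * (cnorm (f n))\<^sup>2"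
      unfolding BCL_V2_def using unitary_cnorm[OF U] by simp
  qed
qed

definition subsp :: "'e::complex_hilbert set \<Rightarrow> bool" where
  "subsp M \<longleftrightarrow> 0 \<in> M \<and> (\<forall>x\<in>M. \<forall>y\<in>M. x + y \<in> M \<and> x - y \<in> M)"

lemma V1_sub: assumes U: "unitary U" and P: "projection P" and M: "subsp M"
  and PM: "\<And>x. x \<in> M \<Longrightarrow> P x \<in> M" and UM: "\<And>x. x \<in> M \<Longrightarrow> inv U x \<in> M"
  and f: "f \<in> H2_sub M"
  shows "BCL_V1 U P f \<in> H2_sub M"
proof -
  have fH: "f \<in> H2" and fM: "\<And>n. f n \<in> M" using f unfolding H2_sub_def by auto
  have add: "x + y \<in> M" and dif: "x - y \<in> M" if "x \<in> M" "y \<in> M" for x y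
    using M that unfolding subsp_def by auto
  have z: "0 \<in> M" using M unfolding subsp_def by auto
  have "BCL_V1 U P f n \<in> M" for n
    unfolding BCL_V1_def using z fM PM UM add dif by simp
  thus ?thesis using V1_H2[OF U P fH] unfolding H2_sub_def by auto
qed

lemma V2_sub: assumes U: "unitary U" and P: "projection P" and M: "subsp M"
  and PM: "\<And>x. x \<in> M \<Longrightarrow> P x \<in> M" and UM: "\<And>x. x \<in> M \<Longrightarrow> U x \<in> M"
  and f: "f \<in> H2_sub M"
  shows "BCL_V2 U P f \<in> H2_sub M"
proof -
  have fH: "f \<in> H2" and fM: "\<And>n. f n \<in> M" using f unfolding H2_sub_def by auto
  have add: "x + y \<in> M" and dif: "x - y \<in> M" if "x \<in> M" "y \<in> M" for x y
    using M that unfolding subsp_def by auto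
  have z: "0 \<in> M" using M unfolding subsp_def by auto
  have "BCL_V2 U P f n \<in> M" for n
    unfolding BCL_V2_def using z fM PM UM add dif by simp
  thus ?thesis using V2_H2[OF U P fH] unfolding H2_sub_def by auto
qed

lemma h2_orth_H2_sub: assumes "0 \<in> E"
  shows "h2_orth (H2_sub E) = H2_sub (orth E)"
proof
  show "h2_orth (H2_sub E) \<subseteq> H2_sub (orth E)"
  proof
    fix g assume g: "g \<in> h2_orth (H2_sub E)"
    have "g m \<in> orth E" for m unfolding orth_def
    proof (intro CollectI ballI)
      fix y assume "y \<in> E"
      hence "ev m y \<in> H2_sub E" using assms ev_H2 unfolding H2_sub_def ev_def by auto
      thus "cinner (g m) y = 0" using g unfolding h2_orth_def by (auto simp: h2_inner_ev_right)
    qed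
    thus "g \<in> H2_sub (orth E)" using g unfolding h2_orth_def H2_sub_def by auto
  qed
next
  show "H2_sub (orth E) \<subseteq> h2_orth (H2_sub E)"
  proof
    fix g assume g: "g \<in> H2_sub (orth E)"
    have "h2_inner g f = 0" if "f \<in> H2_sub E" for f
    proof -
      have "cinner (g n) (f n) = 0" for n using g that unfolding H2_sub_def orth_def by auto
      thus ?thesis unfolding h2_inner_def by simp
    qed
    thus "g \<in> h2_orth (H2_sub E)" using g unfolding h2_orth_def H2_sub_def by auto
  qed
qed

lemma h2_orth_orth: assumes S: "h2_closed_subspace S" and g: "g \<in> h2_orth (h2_orth S)"
  shows "g \<in> S"
proof -
  have SH: "S \<subseteq> H2" using S unfolding h2_closed_subspace_def by blast
  define S' where "S' = {x. vec x \<in> S}"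
  have mem: "mk f \<in> S' \<longleftrightarrow> f \<in> S" if "f \<in> H2" for f using that by (simp add: S'_def mk_inverse)
  have cs: "closed_subspace S'"
    unfolding closed_subspace_def
  proof (intro conjI allI ballI impI)
    show "0 \<in> S'" using S unfolding S'_def h2_closed_subspace_def by (simp add: vec_zero_fun)
    show "x + y \<in> S'" if "x \<in> S'" "y \<in> S'" for x y
      using S that unfolding S'_def h2_closed_subspace_def by (simp add: vec_plus_fun)
    show "a *\<^sub>C x \<in> S'" if "x \<in> S'" for a x
      using S that unfolding S'_def h2_closed_subspace_def by (simp add: vec_scaleC_fun)
    show "L \<in> S'" if "(\<forall>n. X n \<in> S') \<and> (\<lambda>n. cnorm (X n - L)) \<longlonglongrightarrow> 0" for X L
    proof -
      have "(\<lambda>k. h2_norm (\<lambda>n. vec (X k) n - vec L n)) \<longlonglongrightarrow> 0"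
        using that by (simp add: cnorm_l2 vec_minus_fun)
      thus ?thesis using S that unfolding S'_def h2_closed_subspace_def by auto
    qed
  qed
  have gH: "g \<in> H2" using g unfolding h2_orth_def by blast
  have "mk g \<in> orth (orth S')" unfolding orth_def
  proof (intro CollectI ballI)
    fix z assume z: "z \<in> {x. \<forall>y\<in>S'. cinner x y = 0}"
    have "vec z \<in> h2_orth S"
      unfolding h2_orth_def
    proof (intro CollectI conjI ballI)
      show "vec z \<in> H2" by simp
      fix f assume "f \<in> S"
      hence "mk f \<in> S'" using mem SH by blast
      hence "cinner z (mk f) = 0" using z by blast
      thus "h2_inner (vec z) f = 0" using \<open>f \<in> S\<close> SH by (simp add: cinner_l2_def mk_inverse subset_iff)
    qed
    hence "h2_inner g (vec z) = 0" using g unfolding h2_orth_def by blast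
    thus "cinner (mk g) z = 0" using gH by (simp add: cinner_l2_def mk_inverse)
  qed
  hence "mk g \<in> S'" by (rule orth_orth[OF cs])
  thus ?thesis using mem gH by blast
qed




lemma V2_ev0: assumes U: "unitary U" and P: "projection P"
  shows "BCL_V2 U P (ev 0 x) 0 = U (x - P x)" "BCL_V2 U P (ev 0 x) 1 = U (P x)"
  unfolding BCL_V2_def ev_def using clinear_zero[OF proj_clinear[OF P]] by simp_all

lemma V1_ev0: assumes U: "unitary U" and P: "projection P"
  shows "BCL_V1 U P (ev 0 x) 0 = P (inv U x)" "BCL_V1 U P (ev 0 x) 1 = inv U x - P (inv U x)"
  unfolding BCL_V1_def ev_def using clinear_zero[OF proj_clinear[OF P]] unitary_inv_zero[OF U] by simp_all

lemma U_split: assumes U: "unitary U" and P: "projection P" shows "U x = U (x - P x) + U (P x)"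
  using clinear_add[OF unitary_clinear[OF U], of "x - P x" "P x"] by simp

theorem lemma2p1:
  fixes U P :: "'e::complex_hilbert \<Rightarrow> 'e" and S :: "(nat \<Rightarrow> 'e) set"
  assumes "separable_space TYPE('e)"
    and "unitary U" and "projection P"
    and "h2_closed_subspace S"
  shows "(h2_reducing S (BCL_V1 U P) \<and> h2_reducing S (BCL_V2 U P)) \<longleftrightarrow>
    (\<exists>E'. closed_subspace E' \<and> reducing E' U \<and> reducing E' P \<and> S = H2_sub E')"
proof -
  note U = assms(2) and P = assms(3) and S = assms(4)
  have SH: "S \<subseteq> H2" and S0: "(\<lambda>n. 0) \<in> S"
    and Sadd: "\<And>f g. f \<in> S \<Longrightarrow> g \<in> S \<Longrightarrow> (\<lambda>n. f n + g n) \<in> S"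
    and Sscale: "\<And>a f. f \<in> S \<Longrightarrow> (\<lambda>n. a *\<^sub>C f n) \<in> S"
    and Sclosed: "\<And>X L. (\<And>k. X k \<in> S) \<Longrightarrow> L \<in> H2 \<Longrightarrow> (\<lambda>k. h2_norm (\<lambda>n. X k n - L n)) \<longlonglongrightarrow> 0 \<Longrightarrow> L \<in> S"
    using S unfolding h2_closed_subspace_def by blast+
  have Sdiff: "(\<lambda>n. f n - g n) \<in> S" if "f \<in> S" "g \<in> S" for f g
    using Sadd[OF that(1) Sscale[OF that(2), of "-1"]] by (simp add: scaleC_minus_one)
  show ?thesis
  proof
    assume red: "h2_reducing S (BCL_V1 U P) \<and> h2_reducing S (BCL_V2 U P)"
    define W where "W = h2_orth S"
    have V1S: "\<And>f. f \<in> S \<Longrightarrow> BCL_V1 U P f \<in> S" and V2S: "\<And>f. f \<in> S \<Longrightarrow> BCL_V2 U P f \<in> S"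
      and V1W: "\<And>f. f \<in> W \<Longrightarrow> BCL_V1 U P f \<in> W" and V2W: "\<And>f. f \<in> W \<Longrightarrow> BCL_V2 U P f \<in> W"
      using red unfolding h2_reducing_def W_def by blast+
    have shS: "sh f \<in> S" if "f \<in> S" for f using V1S[OF V2S[OF that]] V1V2[OF U P] by simp
    have shW: "sh f \<in> W" if "f \<in> W" for f using V1W[OF V2W[OF that]] V1V2[OF U P] by simp
    have WH: "W \<subseteq> H2" unfolding W_def h2_orth_def by blast
    have bshS: "bsh f \<in> S" if f: "f \<in> S" for f
    proof (rule h2_orth_orth[OF S])
      have fH: "f \<in> H2" using f SH by blast
      show "bsh f \<in> h2_orth (h2_orth S)"
        unfolding h2_orth_def[of "h2_orth S"]
      proof (intro CollectI conjI ballI)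
        show "bsh f \<in> H2" by (rule bsh_H2[OF fH])
        fix g assume g: "g \<in> h2_orth S"
        hence gH: "g \<in> H2" and sg: "sh g \<in> W" using shW unfolding W_def h2_orth_def by blast+
        have "h2_inner (sh g) f = 0" using sg f unfolding W_def h2_orth_def by blast
        hence "h2_inner f (sh g) = 0" using h2_inner_commute[OF fH sh_H2[OF gH]] by simp
        thus "h2_inner (bsh f) g = 0" using h2_inner_bsh[OF fH gH] by simp
      qed
    qed
    define E where "E = {x. ev 0 x \<in> S}"
    have coef0: "f 0 \<in> E" if f: "f \<in> S" for f
    proof -
      have "ev 0 (f 0) = (\<lambda>n. f n - sh (bsh f) n)"
        by (rule ext) (simp add: ev_def sh_def bsh_def)
      thus ?thesis unfolding E_def using Sdiff[OF f shS[OF bshS[OF f]]] by simp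
    qed
    have coef: "f n \<in> E" if "f \<in> S" for f n
      using that
    proof (induction n arbitrary: f)
      case 0 thus ?case by (rule coef0)
    next
      case (Suc n)
      have "bsh f n \<in> E" by (rule Suc.IH[OF bshS[OF Suc.prems]])
      thus ?case by (simp add: bsh_def)
    qed
    have evS: "ev m x \<in> S" if "x \<in> E" for m x
    proof (induction m)
      case 0 thus ?case using that unfolding E_def by simp
    next
      case (Suc m)
      have "ev (Suc m) x = sh (ev m x)" by (rule ext) (auto simp: ev_def sh_def)
      thus ?case using shS[OF Suc.IH] by simp
    qed
    have SE: "S = H2_sub E"
    proof
      show "S \<subseteq> H2_sub E" using SH coef unfolding H2_sub_def by blast
    next
      show "H2_sub E \<subseteq> S"
      proof
        fix g assume g: "g \<in> H2_sub E"
        hence gH: "g \<in> H2" and gE: "\<And>n. g n \<in> E" unfolding H2_sub_def by auto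
        define p where "p = (\<lambda>N n. if n < N then g n else 0)"
        have pS: "p N \<in> S" for N
        proof (induction N)
          case 0 thus ?case using S0 unfolding p_def by simp
        next
          case (Suc N)
          have "p (Suc N) = (\<lambda>n. p N n + ev N (g N) n)"
            by (rule ext) (auto simp: p_def ev_def)
          thus ?case using Sadd[OF Suc.IH evS[OF gE]] by simp
        qed
        have a: "summable (\<lambda>n. (cnorm (g n))\<^sup>2)" using gH by (simp add: H2_iff)
        have eq: "h2_norm (\<lambda>n. p k n - g n) = sqrt (\<Sum>n. if n < k then 0 else (cnorm (g n))\<^sup>2)" for k
        proof -
          have "(\<lambda>n. (cnorm (p k n - g n))\<^sup>2) = (\<lambda>n. if n < k then 0 else (cnorm (g n))\<^sup>2)"
            by (rule ext) (simp add: p_def cnorm_minus)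
          thus ?thesis unfolding h2_norm_def by simp
        qed
        have "(\<lambda>k. h2_norm (\<lambda>n. p k n - g n)) \<longlonglongrightarrow> sqrt 0"
          unfolding eq by (rule tendsto_real_sqrt[OF tail_lim[OF a]])
        thus "g \<in> S" using Sclosed[OF pS gH] by simp
      qed
    qed
    have E0: "0 \<in> E" unfolding E_def using S0 by (simp add: ev_def)
    have cE: "closed_subspace E"
      unfolding closed_subspace_def
    proof (intro conjI ballI allI impI)
      show "0 \<in> E" by (rule E0)
      show "x + y \<in> E" if "x \<in> E" "y \<in> E" for x y
      proof -
        have "ev 0 (x + y) = (\<lambda>n. ev 0 x n + ev 0 y n)" by (rule ext) (simp add: ev_def)
        thus ?thesis using Sadd that unfolding E_def by simp
      qed
      show "a *\<^sub>C x \<in> E" if "x \<in> E" for a x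
      proof -
        have "ev 0 (a *\<^sub>C x) = (\<lambda>n. a *\<^sub>C ev 0 x n)" by (rule ext) (simp add: ev_def)
        thus ?thesis using Sscale that unfolding E_def by simp
      qed
      show "L \<in> E" if "(\<forall>n. X n \<in> E) \<and> (\<lambda>n. cnorm (X n - L)) \<longlonglongrightarrow> 0" for X L
      proof -
        have "ev 0 L \<in> S"
          using Sclosed[of "\<lambda>k. ev 0 (X k)" "ev 0 L", OF _ ev_H2] that unfolding E_def
          by (simp add: h2_norm_ev0)
        thus ?thesis unfolding E_def by simp
      qed
    qed
    have Eadd: "x + y \<in> E" if "x \<in> E" "y \<in> E" for x y using closed_subspace_add[OF cE that] .
    have orthW: "ev 0 x \<in> W" if x: "x \<in> orth E" for x
      unfolding W_def h2_orth_def
    proof (intro CollectI conjI ballI)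
      show "ev 0 x \<in> H2" by (rule ev_H2)
      fix f assume "f \<in> S"
      hence "f 0 \<in> E" by (rule coef0)
      thus "h2_inner (ev 0 x) f = 0" using x unfolding orth_def h2_inner_ev_left
        by (metis (mono_tags, lifting) cinner_commute complex_cnj_zero mem_Collect_eq)
    qed
    have Wcoef: "g m \<in> orth E" if g: "g \<in> W" for g m
      unfolding orth_def
    proof (intro CollectI ballI)
      fix y assume "y \<in> E"
      hence "ev m y \<in> S" by (rule evS)
      thus "cinner (g m) y = 0" using g unfolding W_def h2_orth_def by (auto simp: h2_inner_ev_right)
    qed
    have UE: "U x \<in> E" if "x \<in> E" for x
    proof -
      have s: "BCL_V2 U P (ev 0 x) \<in> S" using V2S evS[OF that] by blast
      show ?thesis using coef[OF s, of 0] coef[OF s, of 1] V2_ev0[OF U P, of x] U_split[OF U P, of x]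
        Eadd by simp
    qed
    have UinvE: "inv U x \<in> E" if "x \<in> E" for x
    proof -
      have s: "BCL_V1 U P (ev 0 x) \<in> S" using V1S evS[OF that] by blast
      show ?thesis using coef[OF s, of 0] coef[OF s, of 1] V1_ev0[OF U P, of x]
        Eadd[of "P (inv U x)" "inv U x - P (inv U x)"] by simp
    qed
    have PE: "P x \<in> E" if "x \<in> E" for x
    proof -
      have s: "BCL_V1 U P (ev 0 (U x)) \<in> S" using V1S evS[OF UE[OF that]] by blast
      show ?thesis using coef[OF s, of 0] V1_ev0[OF U P, of "U x"] U by simp
    qed
    have Oadd: "x + y \<in> orth E" if "x \<in> orth E" "y \<in> orth E" for x y using orth_add that .
    have UO: "U x \<in> orth E" if "x \<in> orth E" for x
    proof -
      have s: "BCL_V2 U P (ev 0 x) \<in> W" using V2W orthW[OF that] by blast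
      show ?thesis using Wcoef[OF s, of 0] Wcoef[OF s, of 1] V2_ev0[OF U P, of x] U_split[OF U P, of x]
        Oadd by simp
    qed
    have PO: "P x \<in> orth E" if "x \<in> orth E" for x
    proof -
      have s: "BCL_V1 U P (ev 0 (U x)) \<in> W" using V1W orthW[OF UO[OF that]] by blast
      show ?thesis using Wcoef[OF s, of 0] V1_ev0[OF U P, of "U x"] U by simp
    qed
    have "closed_subspace E \<and> reducing E U \<and> reducing E P \<and> S = H2_sub E"
      unfolding reducing_def using cE SE UE PE UO PO by blast
    thus "\<exists>E'. closed_subspace E' \<and> reducing E' U \<and> reducing E' P \<and> S = H2_sub E'" by blast
  next
    assume "\<exists>E'. closed_subspace E' \<and> reducing E' U \<and> reducing E' P \<and> S = H2_sub E'"
    then obtain E where cE: "closed_subspace E" and rU: "reducing E U" and rP: "reducing E P"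
      and SE: "S = H2_sub E" by blast
    have UE: "\<And>x. x \<in> E \<Longrightarrow> U x \<in> E" and UO: "\<And>x. x \<in> orth E \<Longrightarrow> U x \<in> orth E"
      using rU unfolding reducing_def by blast+
    have PE: "\<And>x. x \<in> E \<Longrightarrow> P x \<in> E" and PO: "\<And>x. x \<in> orth E \<Longrightarrow> P x \<in> orth E"
      using rP unfolding reducing_def by blast+
    have UinvO: "inv U x \<in> orth E" if x: "x \<in> orth E" for x
      unfolding orth_def
    proof (intro CollectI ballI)
      fix y assume "y \<in> E"
      hence "U y \<in> E" by (rule UE)
      thus "cinner (inv U x) y = 0" using x unfolding orth_def unitary_inv_adj[OF U] by blast
    qed
    have UinvE: "inv U x \<in> E" if x: "x \<in> E" for x
    proof (rule orth_orth[OF cE])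
      show "inv U x \<in> orth (orth E)"
        unfolding orth_def
      proof (intro CollectI ballI)
        fix z assume "z \<in> {x. \<forall>y\<in>E. cinner x y = 0}"
        hence "U z \<in> orth E" using UO unfolding orth_def by blast
        hence "cinner (U z) x = 0" using x unfolding orth_def by blast
        thus "cinner (inv U x) z = 0" unfolding unitary_inv_adj[OF U]
          by (metis cinner_commute complex_cnj_zero)
      qed
    qed
    have sE: "subsp E" unfolding subsp_def
      using closed_subspace_zero[OF cE] closed_subspace_add[OF cE] closed_subspace_diff[OF cE] by blast
    have sO: "subsp (orth E)" unfolding subsp_def using orth_zero orth_add orth_diff by blast
    have W: "h2_orth S = H2_sub (orth E)"
      unfolding SE by (rule h2_orth_H2_sub[OF closed_subspace_zero[OF cE]])
    have "h2_reducing S (BCL_V1 U P)"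
      unfolding h2_reducing_def W
      using V1_sub[OF U P sE PE UinvE] V1_sub[OF U P sO PO UinvO] unfolding SE by blast
    moreover have "h2_reducing S (BCL_V2 U P)"
      unfolding h2_reducing_def W
      using V2_sub[OF U P sE PE UE] V2_sub[OF U P sO PO UO] unfolding SE by blast
    ultimately show "h2_reducing S (BCL_V1 U P) \<and> h2_reducing S (BCL_V2 U P)" by blast
  qed
qed



end
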